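(* Every radically finite ring of finite Krull dimension is Noetherian.
   Context: All rings are commutative with identity. An ideal $I$ of $R$ is called radically perfect if $\mathrm{ht}(I)=\inf\{n \mid \sqrt{I}=\sqrt{(\theta_1,\dots,\theta_n)} \text{ for some } \theta_1,\dots,\theta_n\in R\}$, and moreover, if $\mathrm{ht}(I)=0$, then $\sqrt{I}=\sqrt{(\theta)}$ for some zero divisor $\theta$ of $R$. A ring $R$ is called radically finite if every prime ideal $P$ of $R$ is radically perfect and, in addition, the set of ideals of $R$ that are generated by $\mathrm{ht}(P)$ elements and have radical $P$ has a maximal member $A$ such that there are only finitely many ideals in any chain of ideals between $A$ and $P$. *)

theory Defs
  imports "HOL-Algebra.Ring_Divisibility" "HOL-Library.Extended_Nat"
begin

definition radical :: "('a, 'b) ring_scheme \<Rightarrow> 'a set \<Rightarrow> 'a set" where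
  "radical R I = {x \<in> carrier R. \<exists>n::nat. x [^]\<^bsub>R\<^esub> n \<in> I}"

definition zero_divisor :: "('a, 'b) ring_scheme \<Rightarrow> 'a \<Rightarrow> bool" where
  "zero_divisor R a \<longleftrightarrow> a \<in> carrier R \<and>
     (\<exists>y \<in> carrier R. y \<noteq> \<zero>\<^bsub>R\<^esub> \<and> a \<otimes>\<^bsub>R\<^esub> y = \<zero>\<^bsub>R\<^esub>)"

definition prime_height :: "('a, 'b) ring_scheme \<Rightarrow> 'a set \<Rightarrow> enat" where
  "prime_height R P = Sup {enat n | n. \<exists>f :: nat \<Rightarrow> 'a set.
      (\<forall>i\<le>n. primeideal (f i) R) \<and> (\<forall>i<n. f i \<subset> f (Suc i)) \<and> f n = P}"

definition ideal_height :: "('a, 'b) ring_scheme \<Rightarrow> 'a set \<Rightarrow> enat" where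
  "ideal_height R I = Inf {prime_height R P | P. primeideal P R \<and> I \<subseteq> P}"

definition gen_by :: "('a, 'b) ring_scheme \<Rightarrow> nat \<Rightarrow> 'a set \<Rightarrow> bool" where
  "gen_by R n J \<longleftrightarrow> (\<exists>\<theta> :: nat \<Rightarrow> 'a. \<theta> ` {..<n} \<subseteq> carrier R \<and> J = Idl\<^bsub>R\<^esub> (\<theta> ` {..<n}))"

definition radically_perfect :: "('a, 'b) ring_scheme \<Rightarrow> 'a set \<Rightarrow> bool" where
  "radically_perfect R I \<longleftrightarrow>
     ideal_height R I = Inf {enat n | n. \<exists>J. gen_by R n J \<and> radical R I = radical R J} \<and>
     (ideal_height R I = 0 \<longrightarrow>
        (\<exists>\<theta>. zero_divisor R \<theta> \<and> radical R I = radical R (Idl\<^bsub>R\<^esub> {\<theta>})))"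

definition radically_finite :: "('a, 'b) ring_scheme \<Rightarrow> bool" where
  "radically_finite R \<longleftrightarrow> (\<forall>P. primeideal P R \<longrightarrow>
     radically_perfect R P \<and>
     (\<exists>n A. ideal_height R P = enat n \<and>
        gen_by R n A \<and> radical R A = P \<and>
        \<not> (\<exists>B. gen_by R n B \<and> radical R B = P \<and> A \<subset> B) \<and>
        (\<forall>C. subset.chain {I. ideal I R \<and> A \<subseteq> I \<and> I \<subseteq> P} C \<longrightarrow> finite C)))"

definition finite_krull_dim :: "('a, 'b) ring_scheme \<Rightarrow> bool" where
  "finite_krull_dim R \<longleftrightarrow> (\<exists>d::nat. \<forall>P. primeideal P R \<longrightarrow> prime_height R P \<le> enat d)"

end

theory Submission
  imports Defs
begin

lemma fin_chain_Union_in: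
  assumes "finite C" "C \<noteq> {}" "subset.chain X C"
  shows "\<Union>C \<in> C"
  using assms
proof (induction C rule: finite_ne_induct)
  case (singleton x)
  then show ?case by simp
next
  case (insert x F)
  have ch: "subset.chain X F"
    using insert.prems unfolding pred_on.chain_def by blast
  have u: "\<Union>F \<in> F" using insert.IH ch by blast
  have "x \<subseteq> \<Union>F \<or> \<Union>F \<subseteq> x"
    using insert.prems u unfolding pred_on.chain_def by blast
  then show ?case using u by (auto simp: Un_absorb1 Un_absorb2)
qed

lemma chain_sub: "subset.chain A C \<Longrightarrow> A \<subseteq> B \<Longrightarrow> subset.chain B C"
  unfolding pred_on.chain_def by (meson subset_trans)

lemma chain_sub2: "subset.chain A C \<Longrightarrow> C \<subseteq> A"
  unfolding pred_on.chain_def by simp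

lemma fin_in_chain:
  assumes "finite S" "C \<noteq> {}" "subset.chain X C" "S \<subseteq> \<Union>C"
  shows "\<exists>I\<in>C. S \<subseteq> I"
  using assms
proof (induction S rule: finite_induct)
  case empty
  then show ?case by blast
next
  case (insert s S)
  then obtain I where I: "I \<in> C" "S \<subseteq> I" by blast
  obtain I' where I': "I' \<in> C" "s \<in> I'" using insert.prems(3) by blast
  have "I \<subseteq> I' \<or> I' \<subseteq> I"
    using insert.prems(2) I(1) I'(1) unfolding pred_on.chain_def by blast
  then show ?case using I I' by blast
qed

context cring
begin

lemma colon_ideal:
  assumes "ideal M R" "a \<in> carrier R"
  shows "ideal {r \<in> carrier R. r \<otimes> a \<in> M} R"
proof (rule idealI)
  show "ring R" by (rule ring_axioms)
  interpret M: ideal M R by fact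
  show "subgroup {r \<in> carrier R. r \<otimes> a \<in> M} (add_monoid R)"
  proof (rule add.subgroupI)
    show "{r \<in> carrier R. r \<otimes> a \<in> M} \<noteq> {}"
      using assms by (auto intro!: exI[of _ \<zero>])
    fix x y assume x: "x \<in> {r \<in> carrier R. r \<otimes> a \<in> M}" and y: "y \<in> {r \<in> carrier R. r \<otimes> a \<in> M}"
    then show "x \<oplus> y \<in> {r \<in> carrier R. r \<otimes> a \<in> M}"
      using assms by (auto simp: l_distr)
    show "\<ominus> x \<in> {r \<in> carrier R. r \<otimes> a \<in> M}"
      using x assms by (auto simp: l_minus)
  qed auto
  fix r x assume r: "r \<in> {r \<in> carrier R. r \<otimes> a \<in> M}" and x: "x \<in> carrier R"
  then show "x \<otimes> r \<in> {r \<in> carrier R. r \<otimes> a \<in> M}"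
    using assms by (auto simp: m_assoc M.I_l_closed)
  then show "r \<otimes> x \<in> {r \<in> carrier R. r \<otimes> a \<in> M}"
    using r x by (simp add: m_comm)
qed

lemma Idl_mono: "T \<subseteq> carrier R \<Longrightarrow> S \<subseteq> T \<Longrightarrow> Idl S \<subseteq> Idl T"
  by (meson genideal_ideal genideal_minimal genideal_self order_trans)

lemma prime_fg:
  assumes rf: "radically_finite R" and P: "primeideal P R"
  shows "\<exists>S\<subseteq>carrier R. finite S \<and> P = Idl S"
proof -
  interpret P: primeideal P R by fact
  obtain n A where nA: "gen_by R n A" "radical R A = P"
    and chfin: "\<forall>C. subset.chain {I. ideal I R \<and> A \<subseteq> I \<and> I \<subseteq> P} C \<longrightarrow> finite C"
    using rf P unfolding radically_finite_def by blast
  obtain \<theta> where th: "\<theta> ` {..<n} \<subseteq> carrier R" "A = Idl (\<theta> ` {..<n})"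
    using nA(1) unfolding gen_by_def by blast
  define G where "G = \<theta> ` {..<n}"
  have Gc: "G \<subseteq> carrier R" and AG: "A = Idl G" and fG: "finite G"
    using th by (auto simp: G_def)
  have Aid: "ideal A R" using genideal_ideal[OF Gc] AG by simp
  have AP: "A \<subseteq> P"
  proof
    fix x assume xA: "x \<in> A"
    have xc: "x \<in> carrier R" using ideal.Icarr[OF Aid xA] .
    have x1: "x [^] (1::nat) = x" using xc by (metis One_nat_def l_one nat_pow_0 nat_pow_Suc)
    have "x \<in> radical R A" unfolding radical_def
      using xc xA x1 by (intro CollectI conjI exI[of _ "1::nat"]) simp_all
    then show "x \<in> P" using nA(2) by simp
  qed
  have GP: "G \<subseteq> P" using AP AG Gc genideal_self by blast
  define F where "F = {Idl (G \<union> T) | T. T \<subseteq> P \<and> finite T}"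
  have Fint: "F \<subseteq> {I. ideal I R \<and> A \<subseteq> I \<and> I \<subseteq> P}"
  proof
    fix I assume "I \<in> F"
    then obtain T where T: "T \<subseteq> P" "finite T" "I = Idl (G \<union> T)" unfolding F_def by blast
    have c: "G \<union> T \<subseteq> carrier R" using T Gc P.Icarr by blast
    have "ideal I R" using T c genideal_ideal by simp
    moreover have "A \<subseteq> I" using AG T c Idl_mono by auto
    moreover have "I \<subseteq> P" using T GP genideal_minimal[OF P.is_ideal] by auto
    ultimately show "I \<in> {I. ideal I R \<and> A \<subseteq> I \<and> I \<subseteq> P}" by blast
  qed
  have "\<exists>M\<in>F. \<forall>X\<in>F. M \<subseteq> X \<longrightarrow> X = M"
  proof (rule subset_Zorn)
    fix C assume C: "subset.chain F C"
    show "\<exists>U\<in>F. \<forall>X\<in>C. X \<subseteq> U"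
    proof (cases "C = {}")
      case True
      have "Idl (G \<union> {}) \<in> F" unfolding F_def by blast
      then show ?thesis by (rule bexI[rotated]) (simp add: True)
    next
      case False
      have "subset.chain {I. ideal I R \<and> A \<subseteq> I \<and> I \<subseteq> P} C"
        by (rule chain_sub[OF C Fint])
      then have fC: "finite C" using chfin by simp
      have U: "\<Union>C \<in> C" by (rule fin_chain_Union_in[OF fC False C])
      have "C \<subseteq> F" by (rule chain_sub2[OF C])
      then have "\<Union>C \<in> F" using U by (rule subsetD)
      then show ?thesis by (rule bexI[rotated]) (intro ballI Union_upper)
    qed
  qed
  then obtain M where M: "M \<in> F" "\<And>X. X \<in> F \<Longrightarrow> M \<subseteq> X \<Longrightarrow> X = M" by blast
  then obtain T where T: "T \<subseteq> P" "finite T" "M = Idl (G \<union> T)" unfolding F_def by blast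
  have MP: "M \<subseteq> P" using M(1) Fint by blast
  have "P \<subseteq> M"
  proof
    fix x assume x: "x \<in> P"
    show "x \<in> M"
    proof (rule ccontr)
      assume nx: "x \<notin> M"
      have c: "G \<union> insert x T \<subseteq> carrier R" using T Gc P.Icarr x by blast
      have X: "Idl (G \<union> insert x T) \<in> F" using T x unfolding F_def by blast
      have "M \<subseteq> Idl (G \<union> insert x T)" using T c Idl_mono[of "G \<union> insert x T" "G \<union> T"] by auto
      moreover have "x \<in> Idl (G \<union> insert x T)" using c genideal_self by blast
      ultimately show False using M(2)[OF X] nx by auto
    qed
  qed
  then have "P = Idl (G \<union> T)" using MP T by auto
  moreover have "G \<union> T \<subseteq> carrier R" using T Gc P.Icarr by blast
  ultimately show ?thesis using fG T(2) by blast
qed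


lemma set_add_mem: "x \<in> set_add R I J \<longleftrightarrow> (\<exists>i\<in>I. \<exists>j\<in>J. x = i \<oplus> j)"
  by (auto simp: set_add_def')

lemma cohen:
  assumes pf: "\<And>P. primeideal P R \<Longrightarrow> \<exists>S\<subseteq>carrier R. finite S \<and> P = Idl S"
  shows "noetherian_ring R"
proof (rule ccontr)
  assume nn: "\<not> noetherian_ring R"
  define fg where "fg I \<longleftrightarrow> (\<exists>S\<subseteq>carrier R. finite S \<and> I = Idl S)" for I
  define Sig where "Sig = {I. ideal I R \<and> \<not> fg I}"
  obtain I0 where I0: "I0 \<in> Sig"
  proof -
    have "\<not> (\<forall>I. ideal I R \<longrightarrow> fg I)"
    proof
      assume "\<forall>I. ideal I R \<longrightarrow> fg I"
      then have "noetherian_ring R" by (intro noetherian_ringI) (simp add: fg_def)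
      with nn show False by simp
    qed
    then obtain I where "ideal I R" "\<not> fg I" by blast
    then have "I \<in> Sig" by (simp add: Sig_def)
    then show ?thesis by (rule that)
  qed
  have SigI: "Sig \<subseteq> {I. ideal I R}" by (auto simp: Sig_def)
  have "\<exists>M\<in>Sig. \<forall>X\<in>Sig. M \<subseteq> X \<longrightarrow> X = M"
  proof (rule subset_Zorn)
    fix C assume C: "subset.chain Sig C"
    show "\<exists>U\<in>Sig. \<forall>X\<in>C. X \<subseteq> U"
    proof (cases "C = {}")
      case True
      then show ?thesis using I0 by blast
    next
      case False
      have C2: "subset.chain {I. ideal I R} C" by (rule chain_sub[OF C SigI])
      have Uid: "ideal (\<Union>C) R" using chain_Union_is_ideal[OF C2] False by simp
      have CS: "C \<subseteq> Sig" by (rule chain_sub2[OF C])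
      have "\<not> fg (\<Union>C)"
      proof
        assume "fg (\<Union>C)"
        then obtain S where S: "S \<subseteq> carrier R" "finite S" "\<Union>C = Idl S" by (auto simp: fg_def)
        have "S \<subseteq> \<Union>C" using genideal_self[OF S(1)] S(3) by simp
        then obtain I where I: "I \<in> C" "S \<subseteq> I" using fin_in_chain[OF S(2) False C] by blast
        have Iid: "ideal I R" using I(1) CS SigI by blast
        have "Idl S \<subseteq> I" by (rule genideal_minimal[OF Iid I(2)])
        moreover have "I \<subseteq> \<Union>C" using I(1) by blast
        ultimately have "I = Idl S" using S(3) by simp
        then have "fg I" using S by (auto simp: fg_def)
        moreover have "I \<in> Sig" using I(1) CS by blast
        ultimately show False by (simp add: Sig_def)
      qed
      then have "\<Union>C \<in> Sig" using Uid by (simp add: Sig_def)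
      then show ?thesis by (rule bexI[rotated]) (intro ballI Union_upper)
    qed
  qed
  then obtain M where MS: "M \<in> Sig" and Mmax: "\<And>X. X \<in> Sig \<Longrightarrow> M \<subseteq> X \<Longrightarrow> X = M" by blast
  have Mid: "ideal M R" and Mnfg: "\<not> fg M" using MS by (auto simp: Sig_def)
  interpret M: ideal M R by (rule Mid)
  have bigger: "fg X" if "ideal X R" "M \<subseteq> X" "X \<noteq> M" for X
  proof (rule ccontr)
    assume "\<not> fg X"
    then have "X \<in> Sig" using that by (simp add: Sig_def)
    then show False using Mmax that by blast
  qed
  have "primeideal M R"
  proof (rule primeidealI[OF Mid is_cring])
    show "carrier R \<noteq> M"
    proof
      assume "carrier R = M"
      then have "M = Idl {\<one>}" using genideal_one by simp
      then have "fg M" unfolding fg_def by (intro exI[of _ "{\<one>}"]) simp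
      then show False using Mnfg by simp
    qed
  next
    fix a b assume a: "a \<in> carrier R" and b: "b \<in> carrier R" and ab: "a \<otimes> b \<in> M"
    show "a \<in> M \<or> b \<in> M"
    proof (rule ccontr)
      assume "\<not> (a \<in> M \<or> b \<in> M)"
      then have aM: "a \<notin> M" and bM: "b \<notin> M" by auto
      define K where "K = set_add R M (PIdl a)"
      have Kid: "ideal K R" unfolding K_def by (rule add_ideals[OF Mid cgenideal_ideal[OF a]])
      have MK: "M \<subseteq> K"
      proof
        fix m assume m: "m \<in> M"
        have "m = m \<oplus> \<zero> \<otimes> a" using m M.Icarr a by simp
        moreover have "\<zero> \<otimes> a \<in> PIdl a" unfolding cgenideal_def by blast
        ultimately show "m \<in> K" unfolding K_def set_add_mem using m by blast
      qed
      have "a = \<zero> \<oplus> \<one> \<otimes> a" using a by simp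
      moreover have "\<one> \<otimes> a \<in> PIdl a" unfolding cgenideal_def by blast
      ultimately have aK: "a \<in> K" unfolding K_def set_add_mem using M.zero_closed by blast
      have "fg K" using bigger[OF Kid MK] aK aM by blast
      then obtain S where S: "S \<subseteq> carrier R" "finite S" "K = Idl S" by (auto simp: fg_def)
      define J where "J = {r \<in> carrier R. r \<otimes> a \<in> M}"
      have Jid: "ideal J R" unfolding J_def by (rule colon_ideal[OF Mid a])
      have MJ: "M \<subseteq> J" unfolding J_def using M.Icarr a M.I_r_closed by blast
      have "b \<in> J" unfolding J_def using b a ab by (simp add: m_comm)
      then have "fg J" using bigger[OF Jid MJ] bM by blast
      then obtain T where T: "T \<subseteq> carrier R" "finite T" "J = Idl T" by (auto simp: fg_def)
      have "\<forall>s\<in>S. \<exists>m r. m \<in> M \<and> r \<in> carrier R \<and> s = m \<oplus> r \<otimes> a"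
      proof
        fix s assume "s \<in> S"
        then have "s \<in> K" using genideal_self[OF S(1)] S(3) by blast
        then obtain m j where "m \<in> M" "j \<in> PIdl a" "s = m \<oplus> j" unfolding K_def set_add_mem by blast
        then show "\<exists>m r. m \<in> M \<and> r \<in> carrier R \<and> s = m \<oplus> r \<otimes> a"
          unfolding cgenideal_def by blast
      qed
      then obtain mf rf where mr: "\<And>s. s \<in> S \<Longrightarrow> mf s \<in> M \<and> rf s \<in> carrier R \<and> s = mf s \<oplus> rf s \<otimes> a"
        by metis
      define Gs where "Gs = mf ` S \<union> (\<lambda>t. t \<otimes> a) ` T"
      have TJ: "T \<subseteq> J" using genideal_self[OF T(1)] T(3) by simp
      have GsM: "Gs \<subseteq> M" unfolding Gs_def using mr TJ unfolding J_def by blast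
      have Gsc: "Gs \<subseteq> carrier R" using GsM M.Icarr by blast
      define N where "N = Idl Gs"
      have Nid: "ideal N R" unfolding N_def by (rule genideal_ideal[OF Gsc])
      have NM: "N \<subseteq> M" unfolding N_def by (rule genideal_minimal[OF Mid GsM])
      have GsN: "Gs \<subseteq> N" unfolding N_def by (rule genideal_self[OF Gsc])
      have NRid: "ideal (set_add R N (PIdl a)) R" by (rule add_ideals[OF Nid cgenideal_ideal[OF a]])
      have "S \<subseteq> set_add R N (PIdl a)"
      proof
        fix s assume s: "s \<in> S"
        have "mf s \<in> N" using GsN s unfolding Gs_def by blast
        moreover have "rf s \<otimes> a \<in> PIdl a" using mr[OF s] unfolding cgenideal_def by blast
        ultimately show "s \<in> set_add R N (PIdl a)" unfolding set_add_mem using mr[OF s] by blast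
      qed
      then have KN: "K \<subseteq> set_add R N (PIdl a)" using S(3) genideal_minimal[OF NRid] by simp
      define J' where "J' = {r \<in> carrier R. r \<otimes> a \<in> N}"
      have J'id: "ideal J' R" unfolding J'_def by (rule colon_ideal[OF Nid a])
      have "T \<subseteq> J'" unfolding J'_def using T(1) GsN unfolding Gs_def by blast
      then have JJ': "J \<subseteq> J'" using T(3) genideal_minimal[OF J'id] by simp
      have "M \<subseteq> N"
      proof
        fix m assume m: "m \<in> M"
        then have "m \<in> set_add R N (PIdl a)" using MK KN by blast
        then obtain n j where nj: "n \<in> N" "j \<in> PIdl a" "m = n \<oplus> j" unfolding set_add_mem by blast
        then obtain r where r: "r \<in> carrier R" "j = r \<otimes> a" unfolding cgenideal_def by blast
        have nc: "n \<in> carrier R" using nj(1) NM M.Icarr by blast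
        have jc: "j \<in> carrier R" using r a by simp
        have "j = m \<ominus> n" using nj(3) nc jc by (simp add: a_minus_def add.m_assoc add.m_lcomm r_neg)
        moreover have "m \<ominus> n \<in> M" using m nj(1) NM by (simp add: a_minus_def M.a_closed M.a_inv_closed subsetD)
        ultimately have "r \<in> J" unfolding J_def using r by simp
        then have "r \<otimes> a \<in> N" using JJ' unfolding J'_def by blast
        then show "m \<in> N" using nj r Nid by (simp add: ideal.axioms(1) additive_subgroup.a_closed)
      qed
      then have "M = N" using NM by blast
      moreover have "finite Gs" unfolding Gs_def using S(2) T(2) by simp
      ultimately have "fg M" unfolding fg_def N_def using Gsc by blast
      then show False using Mnfg by simp
    qed
  qed
  then show False using pf Mnfg unfolding fg_def by blast
qed

end

theorem corollary2p2:
  fixes R :: "('a, 'b) ring_scheme"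
  assumes "cring R"
    and "radically_finite R"
    and "finite_krull_dim R"
  shows "noetherian_ring R"
proof -
  interpret cring R by fact
  show ?thesis by (rule cohen) (rule prime_fg[OF assms(2)])
qed

end
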